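(* Let $(S,g)$ be a timed dynamical system. Then the unique timing map $\tau$ on $(S,g)$ is given by $\tau_s=\sup\{n\in\mathbb{N}: g^n(w)=s\text{ for some }w\in S\}$ (with value $\infty$ if the set is unbounded).
   Context: A dynamical system is a pair $(S,g)$ with $S$ a set and $g:S\to S$. A state $s$ is initial if $s\neq g(w)$ for every $w\in S$. A timing map is a map $\tau:S\to\mathbb{N}\cup\{\infty\}$ such that (a) $\tau_s=0$ for every initial state $s$, and (b) $\tau_{g(s)}=\tau_s+1$ for all $s$ (with $\infty+1=\infty$). The system is timed if a timing map exists. *)

theory Defs
  imports Main "HOL-Library.Extended_Nat"
begin

definition dynamical_system :: "'a set \<Rightarrow> ('a \<Rightarrow> 'a) \<Rightarrow> bool" where
  "dynamical_system S g \<longleftrightarrow> (\<forall>s\<in>S. g s \<in> S)"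

definition initial_state :: "'a set \<Rightarrow> ('a \<Rightarrow> 'a) \<Rightarrow> 'a \<Rightarrow> bool" where
  "initial_state S g s \<longleftrightarrow> s \<in> S \<and> (\<forall>w\<in>S. s \<noteq> g w)"

definition timing_map :: "'a set \<Rightarrow> ('a \<Rightarrow> 'a) \<Rightarrow> ('a \<Rightarrow> enat) \<Rightarrow> bool" where
  "timing_map S g \<tau> \<longleftrightarrow>
     (\<forall>s\<in>S. initial_state S g s \<longrightarrow> \<tau> s = 0) \<and>
     (\<forall>s\<in>S. \<tau> (g s) = \<tau> s + 1)"

definition timed :: "'a set \<Rightarrow> ('a \<Rightarrow> 'a) \<Rightarrow> bool" where
  "timed S g \<longleftrightarrow> (\<exists>\<tau>. timing_map S g \<tau>)"

end

theory Submission
  imports Defs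
begin

lemma tm_iter:
  assumes ds: "dynamical_system S g" and tm: "timing_map S g \<tau>" and w: "w \<in> S"
  shows "(g ^^ n) w \<in> S \<and> \<tau> ((g ^^ n) w) = \<tau> w + enat n"
proof (induction n)
  case 0 then show ?case using w by (simp add: zero_enat_def)
next
  case (Suc n)
  then show ?case using ds tm unfolding dynamical_system_def timing_map_def
    by (auto simp: eSuc_enat[symmetric] plus_1_eSuc add.assoc iadd_Suc_right)
qed

lemma tm_back:
  assumes ds: "dynamical_system S g" and tm: "timing_map S g \<tau>"
  shows "s \<in> S \<Longrightarrow> enat k \<le> \<tau> s \<Longrightarrow> \<exists>w\<in>S. (g ^^ k) w = s"
proof (induction k arbitrary: s)
  case 0 then show ?case by auto
next
  case (Suc k)
  have "\<tau> s \<noteq> 0" using Suc.prems by (auto simp: zero_enat_def)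
  hence "\<not> initial_state S g s" using tm Suc.prems(1) unfolding timing_map_def by auto
  then obtain w where w: "w \<in> S" "s = g w" using Suc.prems(1) unfolding initial_state_def by auto
  have "\<tau> s = \<tau> w + 1" using tm w unfolding timing_map_def by auto
  hence "enat k \<le> \<tau> w" using Suc.prems(2)
    by (cases "\<tau> w") (auto simp: one_enat_def)
  then obtain w' where "w' \<in> S" "(g ^^ k) w' = w" using Suc.IH w(1) by blast
  then show ?case using w by (intro bexI[of _ w']) auto
qed

lemma enat_le_by_fin:
  fixes x y :: enat
  assumes "\<And>k. enat k \<le> x \<Longrightarrow> enat k \<le> y"
  shows "x \<le> y"
proof (cases x)
  case (enat n) then show ?thesis using assms by auto
next
  case infinity
  show ?thesis
  proof (cases y)
    case (enat m)
    have "enat (Suc m) \<le> y" using assms infinity by auto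
    then show ?thesis using enat by auto
  qed simp
qed

lemma tm_unique:
  assumes ds: "dynamical_system S g" and tm: "timing_map S g \<tau>" and s: "s \<in> S"
  shows "\<tau> s = Sup {enat n | n. \<exists>w\<in>S. (g ^^ n) w = s}"
proof (rule antisym)
  show "\<tau> s \<le> Sup {enat n | n. \<exists>w\<in>S. (g ^^ n) w = s}"
  proof (rule enat_le_by_fin)
    fix k assume "enat k \<le> \<tau> s"
    then obtain w where "w \<in> S" "(g ^^ k) w = s" using tm_back[OF ds tm s] by blast
    then show "enat k \<le> Sup {enat n | n. \<exists>w\<in>S. (g ^^ n) w = s}"
      by (intro Sup_upper) auto
  qed
next
  show "Sup {enat n | n. \<exists>w\<in>S. (g ^^ n) w = s} \<le> \<tau> s"
  proof (rule Sup_least)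
    fix x assume "x \<in> {enat n | n. \<exists>w\<in>S. (g ^^ n) w = s}"
    then obtain n w where "x = enat n" "w \<in> S" "(g ^^ n) w = s" by auto
    then show "x \<le> \<tau> s" using tm_iter[OF ds tm, of w n] by auto
  qed
qed

theorem fact5p1:
  fixes S :: "'a set" and g :: "'a \<Rightarrow> 'a"
  assumes "dynamical_system S g" and "timed S g"
  shows "timing_map S g (\<lambda>s. Sup {enat n | n. \<exists>w\<in>S. (g ^^ n) w = s})
         \<and> (\<forall>\<tau>. timing_map S g \<tau> \<longrightarrow>
               (\<forall>s\<in>S. \<tau> s = Sup {enat n | n. \<exists>w\<in>S. (g ^^ n) w = s}))"
proof -
  obtain \<tau> where tm: "timing_map S g \<tau>" using assms(2) unfolding timed_def by auto
  have eq: "\<And>s. s \<in> S \<Longrightarrow> Sup {enat n | n. \<exists>w\<in>S. (g ^^ n) w = s} = \<tau> s"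
    using tm_unique[OF assms(1) tm] by simp
  have gS: "\<And>s. s \<in> S \<Longrightarrow> g s \<in> S" using assms(1) unfolding dynamical_system_def by auto
  have "timing_map S g (\<lambda>s. Sup {enat n | n. \<exists>w\<in>S. (g ^^ n) w = s})"
    using tm unfolding timing_map_def by (simp add: eq gS)
  then show ?thesis using tm_unique[OF assms(1)] by blast
qed

end
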